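(* Let $\mathcal{A}$ be a homogeneous Koszul algebra over a field of characteristic $0$ and $(V,d)$ a chain complex. Let $g_0$ be the degree $0$ part of $\mathfrak{g}_{\mathcal{A},V}=\mathrm{Hom}(\overline{\mathcal{A}}^{\text{!`}},\mathrm{End}(V))$ and let $\Gamma=(g_0,\mathrm{BCH},0)$ be the gauge group. Then: (1) the exponential map $\lambda\mapsto e^\lambda$ is a group isomorphism from $\Gamma$ onto the group of $\infty$-isotopies, i.e. the set of degree $0$ maps $f:\mathcal{A}^{\text{!`}}\to\mathrm{End}(V)$ with $f(\mathrm{I})=\mathrm{id}_V$, equipped with the product $\star$ and unit $\mathrm{id}_V$ (the element $1$); (2) the Deligne groupoid of $\mathfrak{g}_{\mathcal{A},V}$ is isomorphic to the groupoid whose objects are the homotopy $\mathcal{A}$-module structures (i.e. $\mathcal{A}_\infty=\Omega\mathcal{A}^{\text{!`}}$-module structures) on $V$ and whose morphisms are the $\infty$-isotopies; concretely, for Maurer–Cartan elements $\bar\alpha,\bar\beta$ and $\lambda\in g_0$, one has $\delta+\bar\beta=e^{\mathrm{ad}_\lambda}(\delta+\bar\alpha)$ if and only if $e^\lambda$ is an $\infty$-isotopy from $\delta+\bar\alpha$ to $\delta+\bar\beta$.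
   Context: Homological grading. $\mathcal{A}^{\text{!`}}$ is the (connected, weight graded) Koszul dual coalgebra with coproduct $\Delta$, weight $0$ part spanned by $\mathrm{I}$, and coaugmentation ideal $\overline{\mathcal{A}}^{\text{!`}}$. The unital dg associative convolution algebra $\mathfrak{a}_{\mathcal{A},V}=\mathrm{Hom}(\mathcal{A}^{\text{!`}},\mathrm{End}(V))$ has product $f\star g=\mu\circ(f\otimes g)\circ\Delta$ ($\mu$ = composition), differential $(\partial_V)_*$ induced by $d$, and unit $1:\mathrm{I}\mapsto\mathrm{id}_V$; $\mathfrak{g}_{\mathcal{A},V}=\mathrm{Hom}(\overline{\mathcal{A}}^{\text{!`}},\mathrm{End}(V))$ is a sub dg algebra and a dg Lie algebra under $[x,y]=x\star y-(-1)^{|x||y|}y\star x$. A Maurer–Cartan element is $\bar\alpha\in\mathfrak{g}_{\mathcal{A},V}$ of degree $-1$ with $(\partial_V)_*(\bar\alpha)+\bar\alpha\star\bar\alpha=0$; these are exactly the homotopy $\mathcal{A}$-module structures on $V$. Let $\delta\in\mathfrak{a}_{\mathcal{A},V}$ be the map $\mathrm{I}\mapsto d$ (zero elsewhere) and write $\alpha=\delta+\bar\alpha$. The exponential is $e^\lambda=\sum_n\lambda^{\star n}/n!$ and $\mathrm{ad}_\lambda(x)=\lambda\star x-x\star\lambda$, $e^{\mathrm{ad}_\lambda}=\sum_n\mathrm{ad}_\lambda^n/n!$ (convergent by the weight grading). The gauge group $\Gamma$ is $g_0$ with product $\mathrm{BCH}(x,y)=x+y+\frac12[x,y]+\cdots$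 (Baker–Campbell–Hausdorff series) and unit $0$. The Deligne groupoid has objects the Maurer–Cartan elements and a morphism $\lambda:\bar\alpha\to\bar\beta$ for each $\lambda\in g_0$ with $\delta+\bar\beta=e^{\mathrm{ad}_\lambda}(\delta+\bar\alpha)$. For homotopy module structures $\alpha=\delta+\bar\alpha$, $\beta=\delta+\bar\beta$ on $V$, an $\infty$-morphism $\alpha\rightsquigarrow\beta$ is a degree $0$ map $f:\mathcal{A}^{\text{!`}}\to\mathrm{End}(V)$ with $f\star\alpha=\beta\star f$; it is an $\infty$-isotopy if $f(\mathrm{I})=\mathrm{id}_V$; composition is given by $\star$. *)

theory Defs
  imports Complex_Main "HOL-Algebra.Group"
begin

text \<open>The coalgebra is described by a homogeneous basis indexed by the type 'b
  (every element of 'b is a basis vector), with weight wt, homological degree deg,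
  a distinguished basis vector e spanning the weight 0 part (the element I), and
  structure constants cf b b1 b2 of the coproduct:
  Delta(b) = sum over (b1,b2) of cf b b1 b2 times (b1 tensor b2).\<close>

definition cop_supp :: "('b \<Rightarrow> 'b \<Rightarrow> 'b \<Rightarrow> 'k::field) \<Rightarrow> 'b \<Rightarrow> ('b \<times> 'b) set" where
  "cop_supp cf b = {(b1, b2). cf b b1 b2 \<noteq> 0}"

definition wg_coalgebra ::
  "('b \<Rightarrow> 'b \<Rightarrow> 'b \<Rightarrow> 'k::field) \<Rightarrow> 'b \<Rightarrow> ('b \<Rightarrow> nat) \<Rightarrow> ('b \<Rightarrow> int) \<Rightarrow> bool" where
  "wg_coalgebra cf e wt deg \<longleftrightarrow>
     (\<forall>b. finite (cop_supp cf b)) \<and>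
     (\<forall>b b1 b2. cf b b1 b2 \<noteq> 0 \<longrightarrow> wt b1 + wt b2 = wt b \<and> deg b1 + deg b2 = deg b) \<and>
     (\<forall>b. wt b = 0 \<longleftrightarrow> b = e) \<and> deg e = 0 \<and>
     (\<forall>b b2. cf b e b2 = (if b2 = b then 1 else 0)) \<and>
     (\<forall>b b1. cf b b1 e = (if b1 = b then 1 else 0)) \<and>
     (\<forall>b b1 b2 b3.
        (\<Sum>b'\<in>{b'. cf b b' b3 \<noteq> 0}. cf b b' b3 * cf b' b1 b2)
      = (\<Sum>b'\<in>{b'. cf b b1 b' \<noteq> 0}. cf b b1 b' * cf b' b2 b3))"

definition graded_vs :: "('k::field_char_0 \<Rightarrow> 'v::ab_group_add \<Rightarrow> 'v) \<Rightarrow> (int \<Rightarrow> 'v set) \<Rightarrow> bool" where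
  "graded_vs s Vg \<longleftrightarrow> vector_space s \<and> (\<forall>i. module.subspace s (Vg i)) \<and>
     (\<forall>v. \<exists>!u. (\<forall>i. u i \<in> Vg i) \<and> finite {i. u i \<noteq> 0} \<and> v = (\<Sum>i\<in>{i. u i \<noteq> 0}. u i))"

definition hom_end :: "('k::field_char_0 \<Rightarrow> 'v::ab_group_add \<Rightarrow> 'v) \<Rightarrow> (int \<Rightarrow> 'v set) \<Rightarrow> int \<Rightarrow> ('v \<Rightarrow> 'v) \<Rightarrow> bool" where
  "hom_end s Vg q \<phi> \<longleftrightarrow> Vector_Spaces.linear s s \<phi> \<and> (\<forall>i. \<forall>x\<in>Vg i. \<phi> x \<in> Vg (i + q))"

definition chain_complex :: "('k::field_char_0 \<Rightarrow> 'v::ab_group_add \<Rightarrow> 'v) \<Rightarrow> (int \<Rightarrow> 'v set) \<Rightarrow> ('v \<Rightarrow> 'v) \<Rightarrow> bool" where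
  "chain_complex s Vg d \<longleftrightarrow> graded_vs s Vg \<and> hom_end s Vg (-1) d \<and> (\<forall>x. d (d x) = 0)"

text \<open>A linear map C \<rightarrow> End(V) is determined by its values on the basis 'b.
  conv_deg n f: f is homogeneous of degree n.\<close>

definition conv_deg :: "('k::field_char_0 \<Rightarrow> 'v::ab_group_add \<Rightarrow> 'v) \<Rightarrow> (int \<Rightarrow> 'v set) \<Rightarrow> ('b \<Rightarrow> int)
    \<Rightarrow> int \<Rightarrow> ('b \<Rightarrow> 'v \<Rightarrow> 'v) \<Rightarrow> bool" where
  "conv_deg s Vg deg n f \<longleftrightarrow> (\<forall>b. hom_end s Vg (deg b + n) (f b))"

text \<open>Convolution product f \<star> g = \<mu> \<circ> (f \<otimes> g) \<circ> \<Delta>, where n is the degree of g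
  (Koszul sign (-1)^(|g| |b1|)).\<close>

definition cstar :: "('k::field_char_0 \<Rightarrow> 'v::ab_group_add \<Rightarrow> 'v) \<Rightarrow> ('b \<Rightarrow> 'b \<Rightarrow> 'b \<Rightarrow> 'k) \<Rightarrow> ('b \<Rightarrow> int)
    \<Rightarrow> int \<Rightarrow> ('b \<Rightarrow> 'v \<Rightarrow> 'v) \<Rightarrow> ('b \<Rightarrow> 'v \<Rightarrow> 'v) \<Rightarrow> 'b \<Rightarrow> 'v \<Rightarrow> 'v" where
  "cstar s cf deg n f g = (\<lambda>b x. \<Sum>(b1, b2)\<in>cop_supp cf b.
      s (cf b b1 b2 * (if even (n * deg b1) then 1 else -1)) (f b1 (g b2 x)))"

definition cunit :: "'b \<Rightarrow> 'b \<Rightarrow> 'v::ab_group_add \<Rightarrow> 'v" where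
  "cunit e = (\<lambda>b. if b = e then id else (\<lambda>x. 0))"

definition cdelta :: "'b \<Rightarrow> ('v::ab_group_add \<Rightarrow> 'v) \<Rightarrow> 'b \<Rightarrow> 'v \<Rightarrow> 'v" where
  "cdelta e d = (\<lambda>b. if b = e then d else (\<lambda>x. 0))"

definition cadd :: "('b \<Rightarrow> 'v::ab_group_add \<Rightarrow> 'v) \<Rightarrow> ('b \<Rightarrow> 'v \<Rightarrow> 'v) \<Rightarrow> 'b \<Rightarrow> 'v \<Rightarrow> 'v" where
  "cadd f g = (\<lambda>b x. f b x + g b x)"

fun cpow :: "('k::field_char_0 \<Rightarrow> 'v::ab_group_add \<Rightarrow> 'v) \<Rightarrow> ('b \<Rightarrow> 'b \<Rightarrow> 'b \<Rightarrow> 'k) \<Rightarrow> ('b \<Rightarrow> int) \<Rightarrow> 'b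
    \<Rightarrow> nat \<Rightarrow> ('b \<Rightarrow> 'v \<Rightarrow> 'v) \<Rightarrow> 'b \<Rightarrow> 'v \<Rightarrow> 'v" where
  "cpow s cf deg e 0 f = cunit e"
| "cpow s cf deg e (Suc k) f = cstar s cf deg 0 f (cpow s cf deg e k f)"

text \<open>Evaluated on a basis vector b, the sum is
  written up to n = wt b; for \<lambda> vanishing on I (i.e. \<lambda> in g) the omitted terms vanish,
  which is the convergence "by the weight grading".\<close>

definition cexp :: "('k::field_char_0 \<Rightarrow> 'v::ab_group_add \<Rightarrow> 'v) \<Rightarrow> ('b \<Rightarrow> 'b \<Rightarrow> 'b \<Rightarrow> 'k) \<Rightarrow> ('b \<Rightarrow> int) \<Rightarrow> 'b
    \<Rightarrow> ('b \<Rightarrow> nat) \<Rightarrow> ('b \<Rightarrow> 'v \<Rightarrow> 'v) \<Rightarrow> 'b \<Rightarrow> 'v \<Rightarrow> 'v" where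
  "cexp s cf deg e wt f = (\<lambda>b x. \<Sum>k\<le>wt b. s (1 / fact k) (cpow s cf deg e k f b x))"

definition clog :: "('k::field_char_0 \<Rightarrow> 'v::ab_group_add \<Rightarrow> 'v) \<Rightarrow> ('b \<Rightarrow> 'b \<Rightarrow> 'b \<Rightarrow> 'k) \<Rightarrow> ('b \<Rightarrow> int) \<Rightarrow> 'b
    \<Rightarrow> ('b \<Rightarrow> nat) \<Rightarrow> ('b \<Rightarrow> 'v \<Rightarrow> 'v) \<Rightarrow> 'b \<Rightarrow> 'v \<Rightarrow> 'v" where
  "clog s cf deg e wt u = (\<lambda>b x. \<Sum>k\<in>{1..wt b}.
      s ((-1) ^ (k + 1) / of_nat k) (cpow s cf deg e k (\<lambda>c y. u c y - cunit e c y) b x))"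

definition cBCH :: "('k::field_char_0 \<Rightarrow> 'v::ab_group_add \<Rightarrow> 'v) \<Rightarrow> ('b \<Rightarrow> 'b \<Rightarrow> 'b \<Rightarrow> 'k) \<Rightarrow> ('b \<Rightarrow> int) \<Rightarrow> 'b
    \<Rightarrow> ('b \<Rightarrow> nat) \<Rightarrow> ('b \<Rightarrow> 'v \<Rightarrow> 'v) \<Rightarrow> ('b \<Rightarrow> 'v \<Rightarrow> 'v) \<Rightarrow> 'b \<Rightarrow> 'v \<Rightarrow> 'v" where
  "cBCH s cf deg e wt x y =
     clog s cf deg e wt (cstar s cf deg 0 (cexp s cf deg e wt x) (cexp s cf deg e wt y))"

definition cad :: "('k::field_char_0 \<Rightarrow> 'v::ab_group_add \<Rightarrow> 'v) \<Rightarrow> ('b \<Rightarrow> 'b \<Rightarrow> 'b \<Rightarrow> 'k) \<Rightarrow> ('b \<Rightarrow> int)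
    \<Rightarrow> int \<Rightarrow> ('b \<Rightarrow> 'v \<Rightarrow> 'v) \<Rightarrow> ('b \<Rightarrow> 'v \<Rightarrow> 'v) \<Rightarrow> 'b \<Rightarrow> 'v \<Rightarrow> 'v" where
  "cad s cf deg n lam x = (\<lambda>b v. cstar s cf deg n lam x b v - cstar s cf deg 0 x lam b v)"

definition cexp_ad :: "('k::field_char_0 \<Rightarrow> 'v::ab_group_add \<Rightarrow> 'v) \<Rightarrow> ('b \<Rightarrow> 'b \<Rightarrow> 'b \<Rightarrow> 'k) \<Rightarrow> ('b \<Rightarrow> int)
    \<Rightarrow> ('b \<Rightarrow> nat) \<Rightarrow> int \<Rightarrow> ('b \<Rightarrow> 'v \<Rightarrow> 'v) \<Rightarrow> ('b \<Rightarrow> 'v \<Rightarrow> 'v) \<Rightarrow> 'b \<Rightarrow> 'v \<Rightarrow> 'v" where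
  "cexp_ad s cf deg wt n lam x =
     (\<lambda>b v. \<Sum>k\<le>wt b. s (1 / fact k) ((cad s cf deg n lam ^^ k) x b v))"

text \<open>g_0: degree 0 elements of Hom(\<bar>C, End V), i.e. vanishing on I.\<close>

definition g0 :: "('k::field_char_0 \<Rightarrow> 'v::ab_group_add \<Rightarrow> 'v) \<Rightarrow> (int \<Rightarrow> 'v set) \<Rightarrow> ('b \<Rightarrow> int) \<Rightarrow> 'b
    \<Rightarrow> ('b \<Rightarrow> 'v \<Rightarrow> 'v) set" where
  "g0 s Vg deg e = {f. conv_deg s Vg deg 0 f \<and> f e = (\<lambda>x. 0)}"

text \<open>Maurer-Cartan elements: \<bar>\<alpha> in g of degree -1 with (\<partial>_V)_*(\<bar>\<alpha>) + \<bar>\<alpha> \<star> \<bar>\<alpha> = 0,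
  where \<partial>_V(\<phi>) = d \<circ> \<phi> - (-1)^|\<phi>| \<phi> \<circ> d.\<close>

definition MC :: "('k::field_char_0 \<Rightarrow> 'v::ab_group_add \<Rightarrow> 'v) \<Rightarrow> (int \<Rightarrow> 'v set) \<Rightarrow> ('v \<Rightarrow> 'v)
    \<Rightarrow> ('b \<Rightarrow> 'b \<Rightarrow> 'b \<Rightarrow> 'k) \<Rightarrow> ('b \<Rightarrow> int) \<Rightarrow> 'b \<Rightarrow> ('b \<Rightarrow> 'v \<Rightarrow> 'v) set" where
  "MC s Vg d cf deg e = {a. conv_deg s Vg deg (-1) a \<and> a e = (\<lambda>x. 0) \<and>
     (\<forall>b x. (d (a b x) - s (if even (deg b - 1) then 1 else -1) (a b (d x)))
            + cstar s cf deg (-1) a a b x = 0)}"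

definition inf_isotopies :: "('k::field_char_0 \<Rightarrow> 'v::ab_group_add \<Rightarrow> 'v) \<Rightarrow> (int \<Rightarrow> 'v set) \<Rightarrow> ('b \<Rightarrow> int) \<Rightarrow> 'b
    \<Rightarrow> ('b \<Rightarrow> 'v \<Rightarrow> 'v) set" where
  "inf_isotopies s Vg deg e = {f. conv_deg s Vg deg 0 f \<and> f e = id}"

definition inf_morphism :: "('k::field_char_0 \<Rightarrow> 'v::ab_group_add \<Rightarrow> 'v) \<Rightarrow> (int \<Rightarrow> 'v set) \<Rightarrow> ('b \<Rightarrow> 'b \<Rightarrow> 'b \<Rightarrow> 'k)
    \<Rightarrow> ('b \<Rightarrow> int) \<Rightarrow> ('b \<Rightarrow> 'v \<Rightarrow> 'v) \<Rightarrow> ('b \<Rightarrow> 'v \<Rightarrow> 'v) \<Rightarrow> ('b \<Rightarrow> 'v \<Rightarrow> 'v) \<Rightarrow> bool" where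
  "inf_morphism s Vg cf deg alpha beta f \<longleftrightarrow>
     conv_deg s Vg deg 0 f \<and> cstar s cf deg (-1) f alpha = cstar s cf deg 0 beta f"

definition gauge_group where
  "gauge_group s Vg cf deg e wt =
     \<lparr>carrier = g0 s Vg deg e, monoid.mult = cBCH s cf deg e wt, one = (\<lambda>b x. 0)\<rparr>"

definition isotopy_group where
  "isotopy_group s Vg cf deg e =
     \<lparr>carrier = inf_isotopies s Vg deg e, monoid.mult = cstar s cf deg 0, one = cunit e\<rparr>"

end

theory Submission imports Defs "HOL-Computational_Algebra.Formal_Power_Series" "HOL-Library.Function_Algebras" begin
unbundle fps_syntax


definition lin :: "('k::field \<Rightarrow> 'v::ab_group_add \<Rightarrow> 'v) \<Rightarrow> ('v \<Rightarrow> 'v) \<Rightarrow> bool" where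
  "lin s \<phi> \<longleftrightarrow> (\<forall>x y. \<phi> (x + y) = \<phi> x + \<phi> y) \<and> (\<forall>c x. \<phi> (s c x) = s c (\<phi> x))"

lemma lin_add: "lin s \<phi> \<Longrightarrow> \<phi> (x + y) = \<phi> x + \<phi> y" by (simp add: lin_def)
lemma lin_scale: "lin s \<phi> \<Longrightarrow> \<phi> (s c x) = s c (\<phi> x)" by (simp add: lin_def)
lemma lin_0: "lin s \<phi> \<Longrightarrow> \<phi> 0 = 0"
proof -
  assume "lin s \<phi>"
  then have "\<phi> (0 + 0) = \<phi> 0 + \<phi> 0" by (rule lin_add)
  then show ?thesis by simp
qed
lemma lin_sum: "lin s \<phi> \<Longrightarrow> \<phi> (\<Sum>i\<in>A. g i) = (\<Sum>i\<in>A. \<phi> (g i))"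
  by (induct A rule: infinite_finite_induct) (simp_all add: lin_0 lin_add)
lemma lin_neg: "lin s \<phi> \<Longrightarrow> \<phi> (- x) = - \<phi> x"
  by (metis add.right_inverse add_eq_0_iff lin_0 lin_add)
lemma lin_diff: "lin s \<phi> \<Longrightarrow> \<phi> (x - y) = \<phi> x - \<phi> y"
  by (metis diff_conv_add_uminus lin_add lin_neg)

lemma fun_sum_app: "(\<Sum>i\<in>A. F i) b x = (\<Sum>i\<in>A. F i b x)"
  by (induct A rule: infinite_finite_induct) simp_all
lemma fun_add_app: "(f + g) b x = f b x + g b x" by simp
lemma fun_diff_app: "(f - g) b x = f b x - g b x" by simp
lemma fun_neg_app: "(- f) b x = - f b x" by simp
lemma fun_zero_app: "(0 :: 'b \<Rightarrow> 'v \<Rightarrow> 'v::zero) b x = 0" by simp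

lemma sw3: "(\<Sum>a\<in>A. \<Sum>x\<in>B. \<Sum>y\<in>C. (G a x y::'a::comm_monoid_add)) = (\<Sum>x\<in>B. \<Sum>y\<in>C. \<Sum>a\<in>A. G a x y)"
proof -
  have "(\<Sum>a\<in>A. \<Sum>x\<in>B. \<Sum>y\<in>C. G a x y) = (\<Sum>x\<in>B. \<Sum>a\<in>A. \<Sum>y\<in>C. G a x y)"
    by (rule sum.swap)
  also have "\<dots> = (\<Sum>x\<in>B. \<Sum>y\<in>C. \<Sum>a\<in>A. G a x y)"
    by (intro sum.cong refl sum.swap)
  finally show ?thesis .
qed
lemma sw4: "(\<Sum>a\<in>D. \<Sum>c\<in>D. \<Sum>x\<in>D. \<Sum>y\<in>D. (G a c x y::'a::comm_monoid_add)) = (\<Sum>x\<in>D. \<Sum>y\<in>D. \<Sum>c\<in>D. \<Sum>a\<in>D. G a c x y)"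
proof -
  have "(\<Sum>a\<in>D. \<Sum>c\<in>D. \<Sum>x\<in>D. \<Sum>y\<in>D. G a c x y) = (\<Sum>c\<in>D. \<Sum>a\<in>D. \<Sum>x\<in>D. \<Sum>y\<in>D. G a c x y)"
    by (rule sum.swap)
  also have "\<dots> = (\<Sum>c\<in>D. \<Sum>x\<in>D. \<Sum>y\<in>D. \<Sum>a\<in>D. G a c x y)"
    by (intro sum.cong refl sw3)
  also have "\<dots> = (\<Sum>x\<in>D. \<Sum>y\<in>D. \<Sum>c\<in>D. \<Sum>a\<in>D. G a c x y)"
    by (rule sw3)
  finally show ?thesis .
qed

locale CV = vector_space s for s :: "'k::field_char_0 \<Rightarrow> 'v::ab_group_add \<Rightarrow> 'v" +
  fixes cf :: "'b \<Rightarrow> 'b \<Rightarrow> 'b \<Rightarrow> 'k" and e :: 'b and wt :: "'b \<Rightarrow> nat" and deg :: "'b \<Rightarrow> int"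
  assumes wg: "wg_coalgebra cf e wt deg"
begin

lemma fin_S: "finite (cop_supp cf b)" using wg by (simp add: wg_coalgebra_def)
lemma cf_wt: "cf b b1 b2 \<noteq> 0 \<Longrightarrow> wt b1 + wt b2 = wt b" using wg by (simp add: wg_coalgebra_def)
lemma cf_deg: "cf b b1 b2 \<noteq> 0 \<Longrightarrow> deg b1 + deg b2 = deg b" using wg by (simp add: wg_coalgebra_def)
lemma wt_e: "wt b = 0 \<longleftrightarrow> b = e" using wg by (simp add: wg_coalgebra_def)
lemma deg_e: "deg e = 0" using wg by (simp add: wg_coalgebra_def)
lemma cf_left: "cf b e b2 = (if b2 = b then 1 else 0)" using wg by (simp add: wg_coalgebra_def)
lemma cf_right: "cf b b1 e = (if b1 = b then 1 else 0)" using wg by (simp add: wg_coalgebra_def)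
lemma coassoc: "(\<Sum>b'\<in>{b'. cf b b' b3 \<noteq> 0}. cf b b' b3 * cf b' b1 b2)
      = (\<Sum>b'\<in>{b'. cf b b1 b' \<noteq> 0}. cf b b1 b' * cf b' b2 b3)"
  using wg unfolding wg_coalgebra_def by blast

lemma S_mem: "p \<in> cop_supp cf b \<longleftrightarrow> cf b (fst p) (snd p) \<noteq> 0"
  by (cases p) (simp add: cop_supp_def)

lemma S_wt1: "(b1, b2) \<in> cop_supp cf b \<Longrightarrow> wt b1 \<le> wt b"
  using cf_wt by (fastforce simp: cop_supp_def)
lemma S_wt2: "(b1, b2) \<in> cop_supp cf b \<Longrightarrow> wt b2 \<le> wt b"
  using cf_wt by (fastforce simp: cop_supp_def)

abbreviation star where "star f g \<equiv> cstar s cf deg 0 f g"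

lemma star_eq: "star f g b x = (\<Sum>(b1, b2)\<in>cop_supp cf b. s (cf b b1 b2) (f b1 (g b2 x)))"
  by (simp add: cstar_def)

definition LL :: "('b \<Rightarrow> 'v \<Rightarrow> 'v) \<Rightarrow> bool" where "LL f \<longleftrightarrow> (\<forall>b. lin s (f b))"

lemma cunit_app: "cunit e b y = (if b = e then y else 0)" by (simp add: cunit_def)

lemma LL_0: "LL f \<Longrightarrow> f b 0 = 0" unfolding LL_def by (blast intro: lin_0)
lemma LL_lin: "LL f \<Longrightarrow> lin s (f b)" by (simp add: LL_def)

lemma unit_left: "star (cunit e) f = f"
proof (intro ext)
  fix b x
  have "star (cunit e) f b x = (\<Sum>p\<in>cop_supp cf b. if (e, b) = p then f b x else 0)"
    unfolding star_eq
    by (rule sum.cong) (auto simp: cunit_app cf_left split: if_split_asm)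
  also have "\<dots> = f b x" using fin_S[of b] by (simp add: cop_supp_def cf_left)
  finally show "star (cunit e) f b x = f b x" .
qed

lemma unit_right: "LL f \<Longrightarrow> star f (cunit e) = f"
proof (intro ext)
  fix b x assume L: "LL f"
  have "star f (cunit e) b x = (\<Sum>p\<in>cop_supp cf b. if (b, e) = p then f b x else 0)"
    unfolding star_eq
    by (rule sum.cong) (auto simp: cunit_app cf_right LL_0[OF L] split: if_split_asm)
  also have "\<dots> = f b x" using fin_S[of b] by (simp add: cop_supp_def cf_right)
  finally show "star f (cunit e) b x = f b x" .
qed

definition comps where "comps b = fst ` cop_supp cf b \<union> snd ` cop_supp cf b"
definition DD where "DD b = comps b \<union> \<Union> (comps ` comps b)"
lemma fin_comps: "finite (comps b)" using fin_S by (simp add: comps_def)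
lemma fin_DD: "finite (DD b)" by (simp add: DD_def fin_comps)
lemma comps_DD: "comps b \<subseteq> DD b" by (auto simp: DD_def)
lemma comps2_DD: "c \<in> comps b \<Longrightarrow> comps c \<subseteq> DD b" by (auto simp: DD_def)
lemma cf_nz_comps: "cf b x y \<noteq> 0 \<Longrightarrow> x \<in> comps b \<and> y \<in> comps b"
  by (force simp: comps_def cop_supp_def)

lemma sum_S_D:
  assumes "finite D" "comps b \<subseteq> D" "\<And>x y. cf b x y = 0 \<Longrightarrow> G x y = 0"
  shows "(\<Sum>(x,y)\<in>cop_supp cf b. G x y) = (\<Sum>x\<in>D. \<Sum>y\<in>D. G x y)"
proof -
  have "(\<Sum>(x,y)\<in>cop_supp cf b. G x y) = (\<Sum>(x,y)\<in>D \<times> D. G x y)"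
  proof (rule sum.mono_neutral_left)
    show "finite (D \<times> D)" using assms(1) by simp
    show "cop_supp cf b \<subseteq> D \<times> D" using assms(2) cf_nz_comps by (auto simp: cop_supp_def)
    show "\<forall>i\<in>D \<times> D - cop_supp cf b. (case i of (x, y) \<Rightarrow> G x y) = 0"
      using assms(3) by (auto simp: cop_supp_def)
  qed
  also have "\<dots> = (\<Sum>x\<in>D. \<Sum>y\<in>D. G x y)" by (simp add: sum.cartesian_product)
  finally show ?thesis .
qed

lemma star_D: "finite D \<Longrightarrow> comps b \<subseteq> D \<Longrightarrow>
   star f g b x = (\<Sum>b1\<in>D. \<Sum>b2\<in>D. s (cf b b1 b2) (f b1 (g b2 x)))"
  unfolding star_eq by (rule sum_S_D) auto

lemma assoc_l: "s (cf b b' b3) (star f g b' y) =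
   (\<Sum>b1\<in>DD b. \<Sum>b2\<in>DD b. s (cf b b' b3 * cf b' b1 b2) (f b1 (g b2 y)))"
proof (cases "cf b b' b3 = 0")
  case True then show ?thesis by simp
next
  case False
  then have "comps b' \<subseteq> DD b" using cf_nz_comps comps2_DD by blast
  then show ?thesis
    by (simp add: star_D[OF fin_DD] scale_sum_right)
qed

lemma assoc_r: "LL f \<Longrightarrow> s (cf b b1 b'') (f b1 (star g h b'' x)) =
   (\<Sum>b2\<in>DD b. \<Sum>b3\<in>DD b. s (cf b b1 b'' * cf b'' b2 b3) (f b1 (g b2 (h b3 x))))"
proof (cases "cf b b1 b'' = 0")
  case True then show ?thesis by simp
next
  assume L: "LL f"
  case False
  then have "comps b'' \<subseteq> DD b" using cf_nz_comps comps2_DD by blast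
  then show ?thesis
    by (simp add: star_D[OF fin_DD] scale_sum_right lin_sum[OF LL_lin[OF L]] lin_scale[OF LL_lin[OF L]])
qed

lemma coassoc_D: "(\<Sum>b'\<in>DD b. cf b b' b3 * cf b' b1 b2) = (\<Sum>b'\<in>DD b. cf b b1 b' * cf b' b2 b3)"
proof -
  have "(\<Sum>b'\<in>DD b. cf b b' b3 * cf b' b1 b2) = (\<Sum>b'\<in>{b'. cf b b' b3 \<noteq> 0}. cf b b' b3 * cf b' b1 b2)"
    by (rule sum.mono_neutral_right[OF fin_DD]) (auto dest: cf_nz_comps intro: comps_DD[THEN subsetD])
  also have "\<dots> = (\<Sum>b'\<in>{b'. cf b b1 b' \<noteq> 0}. cf b b1 b' * cf b' b2 b3)" by (rule coassoc)
  also have "\<dots> = (\<Sum>b'\<in>DD b. cf b b1 b' * cf b' b2 b3)"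
    by (rule sum.mono_neutral_left[OF fin_DD]) (auto dest: cf_nz_comps intro: comps_DD[THEN subsetD])
  finally show ?thesis .
qed

lemma assoc: assumes L: "LL f" shows "star (star f g) h = star f (star g h)"
proof (intro ext)
  fix b x
  let ?D = "DD b"
  have "star (star f g) h b x = (\<Sum>b'\<in>?D. \<Sum>b3\<in>?D. s (cf b b' b3) (star f g b' (h b3 x)))"
    by (rule star_D[OF fin_DD comps_DD])
  also have "\<dots> = (\<Sum>b'\<in>?D. \<Sum>b3\<in>?D. \<Sum>b1\<in>?D. \<Sum>b2\<in>?D. s (cf b b' b3 * cf b' b1 b2) (f b1 (g b2 (h b3 x))))"
    by (simp add: assoc_l)
  also have "\<dots> = (\<Sum>b1\<in>?D. \<Sum>b2\<in>?D. \<Sum>b3\<in>?D. \<Sum>b'\<in>?D. s (cf b b' b3 * cf b' b1 b2) (f b1 (g b2 (h b3 x))))"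
    by (rule sw4)
  also have "\<dots> = (\<Sum>b1\<in>?D. \<Sum>b2\<in>?D. \<Sum>b3\<in>?D. s (\<Sum>b'\<in>?D. cf b b' b3 * cf b' b1 b2) (f b1 (g b2 (h b3 x))))"
    by (simp add: scale_sum_left)
  also have "\<dots> = (\<Sum>b1\<in>?D. \<Sum>b2\<in>?D. \<Sum>b3\<in>?D. s (\<Sum>b'\<in>?D. cf b b1 b' * cf b' b2 b3) (f b1 (g b2 (h b3 x))))"
    by (simp add: coassoc_D)
  also have "\<dots> = (\<Sum>b1\<in>?D. \<Sum>b''\<in>?D. \<Sum>b2\<in>?D. \<Sum>b3\<in>?D. s (cf b b1 b'' * cf b'' b2 b3) (f b1 (g b2 (h b3 x))))"
  proof -
    have "\<And>b1. (\<Sum>b''\<in>?D. \<Sum>b2\<in>?D. \<Sum>b3\<in>?D. s (cf b b1 b'' * cf b'' b2 b3) (f b1 (g b2 (h b3 x))))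
       = (\<Sum>b2\<in>?D. \<Sum>b3\<in>?D. \<Sum>b''\<in>?D. s (cf b b1 b'' * cf b'' b2 b3) (f b1 (g b2 (h b3 x))))"
      by (rule sw3)
    then show ?thesis by (simp add: scale_sum_left)
  qed
  also have "\<dots> = (\<Sum>b1\<in>?D. \<Sum>b''\<in>?D. s (cf b b1 b'') (f b1 (star g h b'' x)))"
    by (simp add: assoc_r[OF L])
  also have "\<dots> = star f (star g h) b x"
    by (rule star_D[OF fin_DD comps_DD, symmetric])
  finally show "star (star f g) h b x = star f (star g h) b x" .
qed

definition smul :: "'k \<Rightarrow> ('b \<Rightarrow> 'v \<Rightarrow> 'v) \<Rightarrow> 'b \<Rightarrow> 'v \<Rightarrow> 'v" where
  "smul c f = (\<lambda>b x. s c (f b x))"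

lemma smul_app: "smul c f b x = s c (f b x)" by (simp add: smul_def)

lemma smul_smul: "smul c (smul d f) = smul (c * d) f" by (simp add: smul_def)
lemma smul_sum: "smul c (\<Sum>i\<in>A. F i) = (\<Sum>i\<in>A. smul c (F i))"
  by (intro ext) (simp add: smul_def fun_sum_app scale_sum_right)

lemma star_add_left: "star (f + g) h = star f h + star g h"
  by (intro ext) (simp add: star_eq scale_right_distrib sum.distrib split_def)
lemma star_add_right: assumes L: "LL f" shows "star f (g + h) = star f g + star f h"
  by (intro ext) (simp add: star_eq scale_right_distrib sum.distrib split_def lin_add[OF LL_lin[OF L]])
lemma star_diff_left: "star (f - g) h = star f h - star g h"
  by (intro ext) (simp add: star_eq scale_right_diff_distrib sum_subtractf split_def)
lemma star_diff_right: assumes L: "LL f" shows "star f (g - h) = star f g - star f h"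
  by (intro ext) (simp add: star_eq scale_right_diff_distrib sum_subtractf split_def lin_diff[OF LL_lin[OF L]])
lemma star_smul_left: "star (smul c f) h = smul c (star f h)"
  by (intro ext) (simp add: star_eq smul_def scale_sum_right split_def mult.commute)
lemma star_smul_right: assumes L: "LL f" shows "star f (smul c h) = smul c (star f h)"
  by (intro ext) (simp add: star_eq smul_def scale_sum_right split_def lin_scale[OF LL_lin[OF L]] mult.commute)
lemma star_zero_left: "star 0 h = 0"
  by (intro ext) (simp add: star_eq split_def)
lemma star_zero_right: assumes L: "LL f" shows "star f 0 = 0"
  by (intro ext) (simp add: star_eq split_def LL_0[OF L])
lemma star_sum_left: "star (\<Sum>i\<in>A. F i) h = (\<Sum>i\<in>A. star (F i) h)"
proof (induct A rule: infinite_finite_induct)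
  case (insert a A) then show ?case by (simp only: sum.insert[OF insert(1,2)] star_add_left insert(3))
next
  case (infinite A) then show ?case by (simp only: sum.infinite[OF infinite] star_zero_left)
qed (simp only: sum.empty star_zero_left)
lemma star_sum_right: assumes L: "LL f" shows "star f (\<Sum>i\<in>A. F i) = (\<Sum>i\<in>A. star f (F i))"
proof (induct A rule: infinite_finite_induct)
  case (insert a A) then show ?case by (simp only: sum.insert[OF insert(1,2)] star_add_right[OF L] insert(3))
next
  case (infinite A) then show ?case by (simp only: sum.infinite[OF infinite] star_zero_right[OF L])
qed (simp only: sum.empty star_zero_right[OF L])

lemma lin_zero: "lin s (\<lambda>x. 0)" by (simp add: lin_def)
lemma lin_id: "lin s (\<lambda>x. x)" by (simp add: lin_def)
lemma lin_add_fun: "lin s f \<Longrightarrow> lin s g \<Longrightarrow> lin s (\<lambda>x. f x + g x)"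
  by (simp add: lin_def scale_right_distrib)
lemma lin_diff_fun: "lin s f \<Longrightarrow> lin s g \<Longrightarrow> lin s (\<lambda>x. f x - g x)"
  by (simp add: lin_def scale_right_diff_distrib)
lemma lin_scale_fun: "lin s f \<Longrightarrow> lin s (\<lambda>x. s c (f x))"
  by (simp add: lin_def scale_right_distrib mult.commute)
lemma lin_comp: "lin s f \<Longrightarrow> lin s g \<Longrightarrow> lin s (\<lambda>x. f (g x))"
  by (simp add: lin_def)
lemma lin_sum_fun: "(\<And>i. i \<in> A \<Longrightarrow> lin s (F i)) \<Longrightarrow> lin s (\<lambda>x. \<Sum>i\<in>A. F i x)"
proof (induct A rule: infinite_finite_induct)
  case (infinite A) then show ?case by (simp add: lin_zero)
next
  case empty then show ?case by (simp add: lin_zero)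
next
  case (insert a A) then show ?case by (simp add: lin_add_fun)
qed

lemma LL_star: assumes "LL f" "LL g" shows "LL (star f g)"
  unfolding LL_def
proof
  fix b
  have e: "star f g b = (\<lambda>x. \<Sum>p\<in>cop_supp cf b. s (cf b (fst p) (snd p)) (f (fst p) (g (snd p) x)))"
    by (rule ext) (simp add: star_eq split_def)
  show "lin s (star f g b)" unfolding e
  proof (rule lin_sum_fun)
    fix p
    have "lin s (\<lambda>x. f (fst p) (g (snd p) x))"
      using lin_comp[of "f (fst p)" "g (snd p)"] assms by (simp add: LL_def)
    then show "lin s (\<lambda>x. s (cf b (fst p) (snd p)) (f (fst p) (g (snd p) x)))"
      by (rule lin_scale_fun)
  qed
qed
lemma LL_add: "LL f \<Longrightarrow> LL g \<Longrightarrow> LL (f + g)"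
  unfolding LL_def plus_fun_def by (intro allI lin_add_fun) auto
lemma LL_diff: "LL f \<Longrightarrow> LL g \<Longrightarrow> LL (f - g)"
  unfolding LL_def fun_diff_def by (intro allI lin_diff_fun) auto
lemma LL_smul: "LL f \<Longrightarrow> LL (smul c f)"
  by (simp add: LL_def smul_def lin_scale_fun)
lemma LL_zero: "LL 0" by (simp add: LL_def lin_zero zero_fun_def)
lemma LL_sum: assumes "\<And>i. i \<in> A \<Longrightarrow> LL (F i)" shows "LL (\<Sum>i\<in>A. F i)"
  unfolding LL_def
proof
  fix b
  have e: "(\<Sum>i\<in>A. F i) b = (\<lambda>x. \<Sum>i\<in>A. F i b x)" by (rule ext) (rule fun_sum_app)
  show "lin s ((\<Sum>i\<in>A. F i) b)" unfolding e
    by (intro lin_sum_fun) (use assms in \<open>auto simp: LL_def\<close>)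
qed
lemma LL_cunit: "LL (cunit e)" unfolding LL_def
proof
  fix b show "lin s (cunit e b)"
    by (cases "b = e") (simp_all add: cunit_def lin_zero lin_def)
qed

lemma loc_star:
  assumes "\<And>c. wt c \<le> N \<Longrightarrow> f c = f' c" "\<And>c. wt c \<le> N \<Longrightarrow> g c = g' c" "wt b \<le> N"
  shows "star f g b = star f' g' b"
proof (intro ext)
  fix x
  show "star f g b x = star f' g' b x"
    unfolding star_eq
  proof (rule sum.cong[OF refl])
    fix p assume p: "p \<in> cop_supp cf b"
    obtain b1 b2 where pp: "p = (b1, b2)" by (cases p)
    have "wt b1 \<le> N" "wt b2 \<le> N" using S_wt1 S_wt2 p pp assms(3) by fastforce+
    then show "(case p of (b1, b2) \<Rightarrow> s (cf b b1 b2) (f b1 (g b2 x))) =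
               (case p of (b1, b2) \<Rightarrow> s (cf b b1 b2) (f' b1 (g' b2 x)))"
      using assms(1,2) pp by simp
  qed
qed

definition van :: "nat \<Rightarrow> ('b \<Rightarrow> 'v \<Rightarrow> 'v) \<Rightarrow> bool" where
  "van m f \<longleftrightarrow> (\<forall>b. wt b < m \<longrightarrow> f b = (\<lambda>x. 0))"

lemma van_app: "van m f \<Longrightarrow> wt b < m \<Longrightarrow> f b x = 0" by (simp add: van_def)
lemma van0: "van 0 f" by (simp add: van_def)
lemma van1_iff': "van (Suc 0) f \<longleftrightarrow> f e = (\<lambda>x. 0)" by (auto simp: van_def wt_e)
lemma van1_iff: "van 1 f \<longleftrightarrow> f e = (\<lambda>x. 0)" by (auto simp: van_def wt_e)

lemma van_star: assumes "LL f" "van m f" "van n g" shows "van (m + n) (star f g)"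
  unfolding van_def
proof (intro allI impI ext)
  fix b x assume wb: "wt b < m + n"
  show "star f g b x = 0" unfolding star_eq
  proof (rule sum.neutral, clarify)
    fix b1 b2 assume p: "(b1, b2) \<in> cop_supp cf b"
    then have "wt b1 + wt b2 = wt b" using cf_wt by (simp add: cop_supp_def)
    then have "wt b1 < m \<or> wt b2 < n" using wb by linarith
    then show "s (cf b b1 b2) (f b1 (g b2 x)) = 0"
      using assms by (auto simp: van_def LL_0)
  qed
qed

abbreviation pw where "pw k w \<equiv> cpow s cf deg e k w"

lemma pw_LL: "LL w \<Longrightarrow> LL (pw k w)"
  by (induct k) (simp_all add: LL_cunit LL_star)
lemma pw_van: "LL w \<Longrightarrow> van 1 w \<Longrightarrow> van k (pw k w)"
proof (induct k)
  case 0 then show ?case by (simp add: van0)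
next
  case (Suc k) then show ?case using van_star[where f=w and m=1 and n=k and g="pw k w"] by simp
qed
lemma pw_add: "LL w \<Longrightarrow> pw (i + j) w = star (pw i w) (pw j w)"
  by (induct i) (simp_all add: unit_left assoc)
lemma pw_one: "LL w \<Longrightarrow> pw 1 w = w" by (simp add: unit_right)

definition Phi :: "('b \<Rightarrow> 'v \<Rightarrow> 'v) \<Rightarrow> 'k fps \<Rightarrow> 'b \<Rightarrow> 'v \<Rightarrow> 'v" where
  "Phi w p = (\<lambda>b x. \<Sum>k\<le>wt b. s (p $ k) (pw k w b x))"

definition Ptr :: "nat \<Rightarrow> ('b \<Rightarrow> 'v \<Rightarrow> 'v) \<Rightarrow> 'k fps \<Rightarrow> 'b \<Rightarrow> 'v \<Rightarrow> 'v" where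
  "Ptr N w p = (\<Sum>k\<le>N. smul (p $ k) (pw k w))"

lemma Phi_N: assumes "LL w" "van 1 w" "wt b \<le> N"
  shows "Phi w p b x = (\<Sum>k\<le>N. s (p $ k) (pw k w b x))"
  unfolding Phi_def
proof (rule sum.mono_neutral_left)
  show "\<forall>i\<in>{..N} - {..wt b}. s (p $ i) (pw i w b x) = 0"
    using pw_van[OF assms(1,2)] by (auto simp: van_def)
qed (use assms(3) in auto)

lemma Phi_Ptr: "LL w \<Longrightarrow> van 1 w \<Longrightarrow> wt b \<le> N \<Longrightarrow> Phi w p b = Ptr N w p b"
  by (intro ext) (simp add: Phi_N Ptr_def fun_sum_app smul_app)

lemma LL_Phi: "LL w \<Longrightarrow> LL (Phi w p)"
  unfolding LL_def Phi_def
  by (intro allI lin_sum_fun lin_scale_fun) (use pw_LL in \<open>auto simp: LL_def\<close>)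

lemma van1_Phi: "p $ 0 = 0 \<Longrightarrow> van 1 (Phi w p)"
  unfolding van1_iff Phi_def using wt_e[of e] by simp

lemma tri_reindex:
  fixes G :: "nat \<Rightarrow> nat \<Rightarrow> 'a::comm_monoid_add"
  assumes "\<And>i j. N < i + j \<Longrightarrow> G i j = 0"
  shows "(\<Sum>i\<le>N. \<Sum>j\<le>N. G i j) = (\<Sum>k\<le>N. \<Sum>i\<le>k. G i (k - i))"
proof -
  have "(\<Sum>i\<le>N. \<Sum>j\<le>N. G i j) = (\<Sum>(i,j)\<in>{..N} \<times> {..N}. G i j)"
    by (simp add: sum.cartesian_product)
  also have "\<dots> = (\<Sum>(i,j)\<in>{(i,j). i + j \<le> N}. G i j)"
    by (rule sum.mono_neutral_right) (auto, metis assms not_le)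
  also have "\<dots> = (\<Sum>k\<le>N. \<Sum>i\<le>k. G i (k - i))"
    by (rule sum.triangle_reindex_eq)
  finally show ?thesis .
qed

lemma Ptr_star: assumes "LL w"
  shows "star (Ptr N w p) (Ptr N w q) = (\<Sum>i\<le>N. \<Sum>j\<le>N. smul (p $ i * q $ j) (pw (i + j) w))"
proof -
  have "star (Ptr N w p) (Ptr N w q) = (\<Sum>i\<le>N. \<Sum>j\<le>N. star (smul (p $ i) (pw i w)) (smul (q $ j) (pw j w)))"
    unfolding Ptr_def star_sum_left
    by (intro sum.cong refl star_sum_right LL_smul pw_LL assms)
  also have "\<dots> = (\<Sum>i\<le>N. \<Sum>j\<le>N. smul (p $ i * q $ j) (pw (i + j) w))"
    by (simp add: star_smul_left star_smul_right pw_LL assms smul_smul pw_add mult.commute)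
  finally show ?thesis .
qed

lemma Phi_mult: assumes L: "LL w" and V: "van 1 w"
  shows "Phi w (p * q) = star (Phi w p) (Phi w q)"
proof (intro ext)
  fix b x
  let ?N = "wt b"
  have "star (Phi w p) (Phi w q) b x = star (Ptr ?N w p) (Ptr ?N w q) b x"
    using loc_star[of ?N "Phi w p" "Ptr ?N w p" "Phi w q" "Ptr ?N w q" b] Phi_Ptr[OF L V] by simp
  also have "\<dots> = (\<Sum>i\<le>?N. \<Sum>j\<le>?N. s (p $ i * q $ j) (pw (i + j) w b x))"
    by (simp add: Ptr_star[OF L] fun_sum_app smul_app)
  also have "\<dots> = (\<Sum>k\<le>?N. \<Sum>i\<le>k. s (p $ i * q $ (k - i)) (pw (i + (k - i)) w b x))"
    by (rule tri_reindex) (use pw_van[OF L V] in \<open>auto simp: van_def\<close>)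
  also have "\<dots> = (\<Sum>k\<le>?N. \<Sum>i\<le>k. s (p $ i * q $ (k - i)) (pw k w b x))"
    by (intro sum.cong refl) simp
  also have "\<dots> = Phi w (p * q) b x"
    by (simp add: Phi_def fps_mult_nth atLeast0AtMost scale_sum_left)
  finally show "Phi w (p * q) b x = star (Phi w p) (Phi w q) b x" ..
qed

lemma sum_single: "(\<And>k. k \<noteq> m \<Longrightarrow> f k = 0) \<Longrightarrow> (\<Sum>k\<le>(n::nat). f k) = (if m \<le> n then f m else (0::'a::comm_monoid_add))"
  by (induct n) (auto simp: le_Suc_eq)

lemma wt_e0: "wt e = 0" using wt_e by simp

lemma Phi_add: "Phi w (p + q) = Phi w p + Phi w q"
  by (intro ext) (simp add: Phi_def scale_left_distrib sum.distrib)
lemma Phi_neg: "Phi w (- p) = - Phi w p"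
  by (intro ext) (simp add: Phi_def sum_negf)
lemma Phi_diff: "Phi w (p - q) = Phi w p - Phi w q"
  by (intro ext) (simp add: Phi_def scale_left_diff_distrib sum_subtractf)
lemma Phi_cmult: "Phi w (fps_const c * p) = smul c (Phi w p)"
  by (intro ext) (simp add: Phi_def smul_def scale_sum_right)
lemma Phi_one: "Phi w 1 = cunit e"
proof (intro ext)
  fix b x
  have "Phi w 1 b x = (if 0 \<le> wt b then s (1 $ 0) (pw 0 w b x) else 0)"
    unfolding Phi_def by (rule sum_single) simp
  then show "Phi w 1 b x = cunit e b x" by simp
qed
lemma Phi_X: assumes L: "LL w" and V: "van 1 w" shows "Phi w fps_X = w"
proof (intro ext)
  fix b x
  have "Phi w fps_X b x = (if 1 \<le> wt b then s (fps_X $ 1) (pw 1 w b x) else 0)"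
    unfolding Phi_def by (rule sum_single) simp
  also have "\<dots> = w b x"
  proof (cases "1 \<le> wt b")
    case True then show ?thesis by (simp add: unit_right[OF L])
  next
    case False then have "wt b < 1" by simp
    then show ?thesis using V by (simp add: van_def)
  qed
  finally show "Phi w fps_X b x = w b x" .
qed

lemma pw_Phi: assumes L: "LL w" and V: "van 1 w" shows "pw k (Phi w q) = Phi w (q ^ k)"
proof (induct k)
  case 0 then show ?case by (simp add: Phi_one)
next
  case (Suc k) then show ?case by (simp add: Phi_mult[OF L V])
qed

lemma Phi_compose: assumes L: "LL w" and V: "van 1 w" and q0: "q $ 0 = 0"
  shows "Phi w (p oo q) = Phi (Phi w q) p"
proof (intro ext)
  fix b x
  let ?N = "wt b"
  have "Phi (Phi w q) p b x = (\<Sum>k\<le>?N. s (p $ k) (Phi w (q ^ k) b x))"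
    unfolding Phi_def[of "Phi w q" p] pw_Phi[OF L V] by simp
  also have "\<dots> = (\<Sum>k\<le>?N. \<Sum>n\<le>?N. s (p $ k * (q ^ k) $ n) (pw n w b x))"
    by (simp add: Phi_def scale_sum_right)
  also have "\<dots> = (\<Sum>n\<le>?N. \<Sum>k\<le>?N. s (p $ k * (q ^ k) $ n) (pw n w b x))"
    by (rule sum.swap)
  also have "\<dots> = (\<Sum>n\<le>?N. \<Sum>k\<in>{0..n}. s (p $ k * (q ^ k) $ n) (pw n w b x))"
  proof (rule sum.cong[OF refl])
    fix n assume n: "n \<in> {..?N}"
    show "(\<Sum>k\<le>?N. s (p $ k * (q ^ k) $ n) (pw n w b x)) = (\<Sum>k\<in>{0..n}. s (p $ k * (q ^ k) $ n) (pw n w b x))"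
    proof (rule sum.mono_neutral_right)
      show "\<forall>i\<in>{..?N} - {0..n}. s (p $ i * (q ^ i) $ n) (pw n w b x) = 0"
        using startsby_zero_power_prefix[OF q0] by auto
    qed (use n in auto)
  qed
  also have "\<dots> = Phi w (p oo q) b x"
    by (simp add: Phi_def fps_compose_nth scale_sum_left)
  finally show "Phi w (p oo q) b x = Phi (Phi w q) p b x" ..
qed

abbreviation cE :: "'k fps" where "cE \<equiv> fps_exp 1"
abbreviation cL :: "'k fps" where "cL \<equiv> fps_ln 1"

lemma cexp_Phi: "cexp s cf deg e wt f = Phi f cE"
  by (intro ext) (simp add: cexp_def Phi_def)

lemma clog_Phi: "clog s cf deg e wt u = Phi (u - cunit e) cL"
proof (intro ext)
  fix b x
  have eq: "(\<lambda>c y. u c y - cunit e c y) = u - cunit e" by (intro ext) simp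
  have "Phi (u - cunit e) cL b x = (\<Sum>k\<in>{1..wt b}. s (cL $ k) (pw k (u - cunit e) b x))"
    unfolding Phi_def by (rule sum.mono_neutral_right) (auto simp: fps_ln_nth)
  also have "\<dots> = clog s cf deg e wt u b x"
    unfolding clog_def eq
  proof (rule sum.cong[OF refl])
    fix k assume "k \<in> {1..wt b}"
    then have "(-1::'k) ^ (k + 1) = (-1) ^ (k - 1)"
      proof -
      obtain j where "k = Suc j" using \<open>k \<in> {1..wt b}\<close> by (cases k) auto
      then show ?thesis by simp
    qed
    then show "s (cL $ k) (pw k (u - cunit e) b x) = s ((-1) ^ (k + 1) / of_nat k) (pw k (u - cunit e) b x)"
      using \<open>k \<in> {1..wt b}\<close> by (simp add: fps_ln_nth)
  qed
  finally show "clog s cf deg e wt u b x = Phi (u - cunit e) cL b x" ..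
qed

lemma fpsE0: "(cE - 1) $ 0 = 0" by simp
lemma fps_LE: "cL oo (cE - 1) = fps_X"
  using fps_inv_fps_exp_compose(1)[of "1::'k"] fps_ln_fps_exp_inv[of "1::'k"] by simp
lemma fps_EL: "cE oo cL = fps_X + 1"
proof -
  have "(cE - 1) oo cL = fps_X"
    using fps_inv_fps_exp_compose(2)[of "1::'k"] fps_ln_fps_exp_inv[of "1::'k"] by simp
  then have "(cE oo cL) - 1 = fps_X" by (simp add: fps_compose_sub_distrib)
  then show ?thesis by (simp add: algebra_simps)
qed

lemma log_exp: assumes L: "LL f" and V: "van 1 f"
  shows "clog s cf deg e wt (cexp s cf deg e wt f) = f"
proof -
  have "Phi f cE - cunit e = Phi f (cE - 1)" by (simp add: Phi_diff Phi_one)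
  then have "clog s cf deg e wt (cexp s cf deg e wt f) = Phi (Phi f (cE - 1)) cL"
    by (simp add: clog_Phi cexp_Phi)
  also have "\<dots> = Phi f (cL oo (cE - 1))" by (rule Phi_compose[OF L V fpsE0, symmetric])
  also have "\<dots> = f" by (simp add: fps_LE Phi_X[OF L V])
  finally show ?thesis .
qed

lemma exp_log: assumes L: "LL (u - cunit e)" and V: "van 1 (u - cunit e)"
  shows "cexp s cf deg e wt (clog s cf deg e wt u) = u"
proof -
  have "cexp s cf deg e wt (clog s cf deg e wt u) = Phi (Phi (u - cunit e) cL) cE"
    by (simp add: clog_Phi cexp_Phi)
  also have "\<dots> = Phi (u - cunit e) (cE oo cL)" by (rule Phi_compose[OF L V fps_ln_0, symmetric])
  also have "\<dots> = u" by (simp add: fps_EL Phi_add Phi_X[OF L V] Phi_one)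
  finally show ?thesis .
qed

lemma exp_neg_mult: assumes L: "LL f" and V: "van 1 f"
  shows "star (cexp s cf deg e wt (- f)) (cexp s cf deg e wt f) = cunit e"
    and "star (cexp s cf deg e wt f) (cexp s cf deg e wt (- f)) = cunit e"
proof -
  have m: "- f = Phi f (- fps_X)" by (simp add: Phi_neg Phi_X[OF L V])
  have "cexp s cf deg e wt (- f) = Phi f (cE oo (- fps_X))"
    unfolding cexp_Phi m by (rule Phi_compose[OF L V, symmetric]) simp
  also have "\<dots> = Phi f (fps_exp (-1))" by simp
  finally have n: "Phi (- f) cE = Phi f (fps_exp (-1))" by (simp add: cexp_Phi)
  show "star (cexp s cf deg e wt (- f)) (cexp s cf deg e wt f) = cunit e"
    unfolding cexp_Phi n Phi_mult[OF L V, symmetric] fps_exp_add_mult[symmetric] by (simp add: Phi_one)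
  show "star (cexp s cf deg e wt f) (cexp s cf deg e wt (- f)) = cunit e"
    unfolding cexp_Phi n Phi_mult[OF L V, symmetric] fps_exp_add_mult[symmetric] by (simp add: Phi_one)
qed

definition sgn_k :: "int \<Rightarrow> 'k" where "sgn_k n = (if even n then 1 else -1)"
lemma sgn_k_add: "sgn_k (m + n) = sgn_k m * sgn_k n" by (auto simp: sgn_k_def)

definition sg :: "('b \<Rightarrow> 'v \<Rightarrow> 'v) \<Rightarrow> 'b \<Rightarrow> 'v \<Rightarrow> 'v" where
  "sg f = (\<lambda>b x. s (sgn_k (deg b)) (f b x))"

lemma cstar_m1: "cstar s cf deg (-1) f g = star (sg f) g"
  by (intro ext) (simp add: cstar_def sg_def sgn_k_def split_def)

lemma LL_sg: "LL f \<Longrightarrow> LL (sg f)"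
  unfolding LL_def sg_def by (intro allI lin_scale_fun) auto

lemma van_sg: "van m f \<Longrightarrow> van m (sg f)"
  by (simp add: van_def sg_def)

lemma sg_star: assumes L: "LL f" shows "sg (star f g) = star (sg f) (sg g)"
proof (intro ext)
  fix b x
  show "sg (star f g) b x = star (sg f) (sg g) b x"
    unfolding sg_def star_eq scale_sum_right
  proof (rule sum.cong[OF refl], clarify)
    fix b1 b2 assume "(b1, b2) \<in> cop_supp cf b"
    then have "deg b = deg b1 + deg b2" using cf_deg by (simp add: cop_supp_def)
    then show "s (sgn_k (deg b)) (s (cf b b1 b2) (f b1 (g b2 x))) =
       s (cf b b1 b2) (s (sgn_k (deg b1)) (f b1 (s (sgn_k (deg b2)) (g b2 x))))"
      by (simp add: lin_scale[OF LL_lin[OF L]] sgn_k_add mult.commute mult.left_commute)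
  qed
qed

lemma sg_cunit: "sg (cunit e) = cunit e"
  by (intro ext) (simp add: sg_def cunit_app deg_e sgn_k_def)

lemma sg_pw: "LL w \<Longrightarrow> sg (pw k w) = pw k (sg w)"
  by (induct k) (simp_all add: sg_cunit sg_star)

lemma sg_Phi: assumes L: "LL w" shows "sg (Phi w p) = Phi (sg w) p"
proof (intro ext)
  fix b x
  have "\<And>k. pw k (sg w) b x = s (sgn_k (deg b)) (pw k w b x)"
    using sg_pw[OF L] by (metis sg_def)
  then show "sg (Phi w p) b x = Phi (sg w) p b x"
    by (simp add: sg_def Phi_def scale_sum_right mult.commute)
qed

lemma sg_cexp: "LL w \<Longrightarrow> sg (cexp s cf deg e wt w) = Phi (sg w) cE"
  by (simp add: cexp_Phi sg_Phi)

lemma smul_add_left: "smul (a + c) f = smul a f + smul c f"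
  by (intro ext) (simp add: smul_def scale_left_distrib)
lemma smul_add_right: "smul a (f + g) = smul a f + smul a g"
  by (intro ext) (simp add: smul_def scale_right_distrib)
lemma smul_one: "smul 1 f = f" by (simp add: smul_def)
lemma smul_zero_left: "smul 0 f = 0" by (intro ext) (simp add: smul_def)

lemma star_neg_right: "LL f \<Longrightarrow> star f (- g) = - star f g"
  using star_diff_right[of f 0 g] by (simp add: star_zero_right)

lemma cad_eq: "LL y \<Longrightarrow> cad s cf deg (-1) lam y = star (sg lam) y + star y (- lam)"
  by (intro ext) (simp add: cad_def cstar_m1 star_neg_right)

context
  fixes lam x :: "'b \<Rightarrow> 'v \<Rightarrow> 'v"
  assumes Ll: "LL lam" and Lx: "LL x"
begin

definition MM where "MM i j = star (star (pw i (sg lam)) x) (pw j (- lam))"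

lemma LLm: "LL (sg lam)" using LL_sg[OF Ll] .
lemma LLn: "LL (- lam)" using LL_diff[OF LL_zero Ll] by simp

lemma LL_MM: "LL (MM i j)"
  unfolding MM_def by (intro LL_star pw_LL LLm LLn Lx)

lemma ad_MM: "cad s cf deg (-1) lam (MM i j) = MM (Suc i) j + MM i (Suc j)"
proof -
  have "star (sg lam) (MM i j) = MM (Suc i) j"
    unfolding MM_def by (simp add: assoc LLm pw_LL LL_star Lx)
  moreover have "star (MM i j) (- lam) = MM i (Suc j)"
  proof -
    have "star (pw j (- lam)) (- lam) = pw (Suc j) (- lam)"
      using pw_add[OF LLn, of j 1] pw_one[OF LLn] by simp
    then show ?thesis unfolding MM_def
      by (simp add: assoc LL_star pw_LL LLm Lx)
  qed
  ultimately show ?thesis by (simp add: cad_eq LL_MM)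
qed

lemma cad_sum: "(\<And>i. i \<in> A \<Longrightarrow> LL (F i)) \<Longrightarrow>
   cad s cf deg (-1) lam (\<Sum>i\<in>A. smul (c i) (F i)) = (\<Sum>i\<in>A. smul (c i) (cad s cf deg (-1) lam (F i)))"
  by (simp add: cad_eq LL_sum LL_smul star_sum_left star_sum_right LLm star_smul_left
      star_smul_right smul_sum smul_add_right sum.distrib)

lemma ad_pow: "(cad s cf deg (-1) lam ^^ k) x = (\<Sum>i\<le>k. smul (of_nat (k choose i)) (MM i (k - i)))"
proof (induct k)
  case 0
  have "MM 0 0 = x" unfolding MM_def by (simp add: unit_left unit_right Lx)
  then show ?case by (simp add: smul_one)
next
  case (Suc k)
  have "(cad s cf deg (-1) lam ^^ Suc k) x = cad s cf deg (-1) lam (\<Sum>i\<le>k. smul (of_nat (k choose i)) (MM i (k - i)))"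
    using Suc by simp
  also have "\<dots> = (\<Sum>i\<le>k. smul (of_nat (k choose i)) (MM (Suc i) (k - i) + MM i (Suc (k - i))))"
    by (simp add: cad_sum LL_MM ad_MM)
  also have "\<dots> = (\<Sum>i\<le>k. smul (of_nat (k choose i)) (MM (Suc i) (k - i)))
                 + (\<Sum>i\<le>k. smul (of_nat (k choose i)) (MM i (Suc k - i)))"
    by (simp add: smul_add_right sum.distrib Suc_diff_le)
  also have "(\<Sum>i\<le>k. smul (of_nat (k choose i)) (MM i (Suc k - i)))
      = MM 0 (Suc k) + (\<Sum>i\<le>k. smul (of_nat (k choose Suc i)) (MM (Suc i) (k - i)))"
  proof -
    have "(\<Sum>i\<le>k. smul (of_nat (k choose i)) (MM i (Suc k - i))) = (\<Sum>i\<le>Suc k. smul (of_nat (k choose i)) (MM i (Suc k - i)))"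
      by (simp add: smul_zero_left binomial_eq_0)
    also have "\<dots> = MM 0 (Suc k) + (\<Sum>i\<le>k. smul (of_nat (k choose Suc i)) (MM (Suc i) (k - i)))"
      by (subst sum.atMost_Suc_shift) (simp add: smul_one del: sum.atMost_Suc)
    finally show ?thesis .
  qed
  also have "(\<Sum>i\<le>k. smul (of_nat (k choose i)) (MM (Suc i) (k - i))) + (MM 0 (Suc k) + (\<Sum>i\<le>k. smul (of_nat (k choose Suc i)) (MM (Suc i) (k - i))))
      = (\<Sum>i\<le>Suc k. smul (of_nat (Suc k choose i)) (MM i (Suc k - i)))"
    by (subst sum.atMost_Suc_shift) (simp add: smul_one smul_add_left sum.distrib ac_simps del: sum.atMost_Suc)
  finally show ?case .
qed

lemma van_MM: "van 1 lam \<Longrightarrow> van (i + j) (MM i j)"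
proof -
  assume V: "van 1 lam"
  have "van (i + 0) (star (pw i (sg lam)) x)"
    by (rule van_star) (auto intro: pw_LL LLm pw_van van_sg V van0)
  then have "van i (star (pw i (sg lam)) x)" by simp
  moreover have "van 1 (- lam)" using V by (simp add: van_def fun_Compl_def)
  ultimately show ?thesis unfolding MM_def
    by (intro van_star LL_star pw_LL LLm Lx pw_van LLn)
qed

lemma Ptr_sum: "Ptr N w cE = (\<Sum>k\<le>N. smul (1 / fact k) (pw k w))"
  by (simp add: Ptr_def)

lemma exp_ad: assumes V: "van 1 lam"
  shows "cexp_ad s cf deg wt (-1) lam x = star (star (Phi (sg lam) cE) x) (Phi (- lam) cE)"
proof (intro ext)
  fix b v
  let ?N = "wt b"
  have Vm: "van 1 (sg lam)" using van_sg[OF V] .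
  have Vn: "van 1 (- lam)" using V by (simp add: van_def fun_Compl_def)
  have agree1: "\<And>c. wt c \<le> ?N \<Longrightarrow> star (Phi (sg lam) cE) x c = star (Ptr ?N (sg lam) cE) x c"
    by (rule loc_star) (auto simp: Phi_Ptr[OF LLm Vm])
  have "star (star (Phi (sg lam) cE) x) (Phi (- lam) cE) b v
      = star (star (Ptr ?N (sg lam) cE) x) (Ptr ?N (- lam) cE) b v"
    using loc_star[of ?N "star (Phi (sg lam) cE) x" "star (Ptr ?N (sg lam) cE) x"
        "Phi (- lam) cE" "Ptr ?N (- lam) cE" b] agree1 Phi_Ptr[OF LLn Vn] by simp
  also have "star (star (Ptr ?N (sg lam) cE) x) (Ptr ?N (- lam) cE)
      = (\<Sum>i\<le>?N. \<Sum>j\<le>?N. smul (1 / fact i * (1 / fact j)) (MM i j))"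
  proof -
    have LP: "LL (star (Ptr ?N (sg lam) cE) x)"
      unfolding Ptr_def by (intro LL_star LL_sum LL_smul pw_LL LLm Lx)
    have "star (star (Ptr ?N (sg lam) cE) x) (Ptr ?N (- lam) cE)
       = (\<Sum>j\<le>?N. smul (1 / fact j) (star (star (Ptr ?N (sg lam) cE) x) (pw j (- lam))))"
      unfolding Ptr_sum[of _ "- lam"] star_sum_right[OF LP] star_smul_right[OF LP] ..
    also have "\<dots> = (\<Sum>j\<le>?N. smul (1 / fact j) (\<Sum>i\<le>?N. smul (1 / fact i) (MM i j)))"
      unfolding Ptr_sum star_sum_left star_smul_left MM_def ..
    also have "\<dots> = (\<Sum>j\<le>?N. \<Sum>i\<le>?N. smul (1 / fact i * (1 / fact j)) (MM i j))"
      by (simp add: smul_sum smul_smul mult.commute)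
    also have "\<dots> = (\<Sum>i\<le>?N. \<Sum>j\<le>?N. smul (1 / fact i * (1 / fact j)) (MM i j))"
      by (rule sum.swap)
    finally show ?thesis .
  qed
  also have "(\<Sum>i\<le>?N. \<Sum>j\<le>?N. smul (1 / fact i * (1 / fact j)) (MM i j)) b v
      = (\<Sum>i\<le>?N. \<Sum>j\<le>?N. s (1 / fact i * (1 / fact j)) (MM i j b v))"
    by (simp add: fun_sum_app smul_app)
  also have "\<dots> = (\<Sum>k\<le>?N. \<Sum>i\<le>k. s (1 / fact i * (1 / fact (k - i))) (MM i (k - i) b v))"
    by (rule tri_reindex) (use van_MM[OF V] in \<open>auto simp: van_def\<close>)
  also have "\<dots> = (\<Sum>k\<le>?N. s (1 / fact k) ((cad s cf deg (-1) lam ^^ k) x b v))"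
  proof (rule sum.cong[OF refl])
    fix k
    have "s (1 / fact k) ((cad s cf deg (-1) lam ^^ k) x b v)
        = (\<Sum>i\<le>k. s (1 / fact k * of_nat (k choose i)) (MM i (k - i) b v))"
      by (simp add: ad_pow fun_sum_app smul_app scale_sum_right)
    also have "\<dots> = (\<Sum>i\<le>k. s (1 / fact i * (1 / fact (k - i))) (MM i (k - i) b v))"
    proof (rule sum.cong[OF refl])
      fix i assume "i \<in> {..k}"
      then have "i \<le> k" by simp
      then have "(1 / fact k * of_nat (k choose i) :: 'k) = 1 / fact i * (1 / fact (k - i))"
        by (simp add: binomial_fact)
      then show "s (1 / fact k * of_nat (k choose i)) (MM i (k - i) b v) = s (1 / fact i * (1 / fact (k - i))) (MM i (k - i) b v)"
        by simp
    qed
    finally show "(\<Sum>i\<le>k. s (1 / fact i * (1 / fact (k - i))) (MM i (k - i) b v)) = s (1 / fact k) ((cad s cf deg (-1) lam ^^ k) x b v)" ..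
  qed
  also have "\<dots> = cexp_ad s cf deg wt (-1) lam x b v"
    by (simp add: cexp_ad_def)
  finally show "cexp_ad s cf deg wt (-1) lam x b v = star (star (Phi (sg lam) cE) x) (Phi (- lam) cE) b v" ..
qed

end

lemma cf_e: "cf e b1 b2 \<noteq> 0 \<Longrightarrow> b1 = e \<and> b2 = e"
  using cf_wt[of e b1 b2] wt_e wt_e0 by auto
lemma cf_eee: "cf e e e = 1" by (simp add: cf_left)
lemma S_e: "cop_supp cf e = {(e, e)}"
  using cf_e cf_eee by (auto simp: cop_supp_def)

lemma star_at_e: "star f g e x = f e (g e x)"
  by (simp add: star_eq S_e cf_eee)

lemma Phi_at_e: "Phi w p e x = s (p $ 0) (x)"
  by (simp add: Phi_def wt_e0 cunit_app)

lemma pw_zero: "pw (Suc k) (0::'b \<Rightarrow> 'v \<Rightarrow> 'v) = 0"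
  by (simp add: star_zero_left)

lemma Phi_zero_w: "Phi 0 p = smul (p $ 0) (cunit e)"
proof (intro ext)
  fix b x
  have "Phi 0 p b x = (if 0 \<le> wt b then s (p $ 0) (pw 0 (0::'b \<Rightarrow> 'v \<Rightarrow> 'v) b x) else 0)"
    unfolding Phi_def
  proof (rule sum_single)
    fix k :: nat assume "k \<noteq> 0"
    then obtain j where "k = Suc j" by (cases k) auto
    then show "s (p $ k) (pw k 0 b x) = 0" by (simp only: pw_zero) simp
  qed
  then show "Phi 0 p b x = smul (p $ 0) (cunit e) b x" by (simp add: smul_app)
qed

end

locale CVG = CV s cf e wt deg for s :: "'k::field_char_0 \<Rightarrow> 'v::ab_group_add \<Rightarrow> 'v"
  and cf :: "'b \<Rightarrow> 'b \<Rightarrow> 'b \<Rightarrow> 'k" and e :: 'b and wt :: "'b \<Rightarrow> nat" and deg :: "'b \<Rightarrow> int" +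
  fixes Vg :: "int \<Rightarrow> 'v set"
  assumes subsp: "\<And>i. module.subspace s (Vg i)"
begin

lemma linear_lin: "Vector_Spaces.linear s s \<phi> \<longleftrightarrow> lin s \<phi>"
  using vector_space_axioms by (auto simp: Vector_Spaces.linear_iff lin_def)

abbreviation hd where "hd q \<phi> \<equiv> hom_end s Vg q \<phi>"

lemma hd_lin: "hd q \<phi> \<Longrightarrow> lin s \<phi>" by (simp add: hom_end_def linear_lin)

lemma hd_zero: "hd q (\<lambda>x. 0)"
  by (simp add: hom_end_def linear_lin lin_zero subspace_0[OF subsp])
lemma hd_id: "hd 0 (\<lambda>x. x)"
  by (simp add: hom_end_def linear_lin lin_id)
lemma hd_add: "hd q f \<Longrightarrow> hd q g \<Longrightarrow> hd q (\<lambda>x. f x + g x)"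
  by (simp add: hom_end_def linear_lin lin_add_fun subspace_add[OF subsp])
lemma hd_diff: "hd q f \<Longrightarrow> hd q g \<Longrightarrow> hd q (\<lambda>x. f x - g x)"
  by (simp add: hom_end_def linear_lin lin_diff_fun subspace_diff[OF subsp])
lemma hd_scale: "hd q f \<Longrightarrow> hd q (\<lambda>x. s c (f x))"
  by (simp add: hom_end_def linear_lin lin_scale_fun subspace_scale[OF subsp])
lemma hd_comp: assumes "hd q1 f" "hd q2 g" "q = q1 + q2" shows "hd q (\<lambda>x. f (g x))"
proof -
  have "lin s (\<lambda>x. f (g x))" using lin_comp[of f g] assms(1,2) by (simp add: hd_lin)
  moreover have "\<forall>i. \<forall>x\<in>Vg i. f (g x) \<in> Vg (i + q)"
  proof (intro allI ballI)
    fix i x assume "x \<in> Vg i"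
    then have "g x \<in> Vg (i + q2)" using assms(2) by (simp add: hom_end_def)
    then have "f (g x) \<in> Vg (i + q2 + q1)" using assms(1) by (simp add: hom_end_def)
    then show "f (g x) \<in> Vg (i + q)" using assms(3) by (simp add: ac_simps)
  qed
  ultimately show ?thesis by (simp add: hom_end_def linear_lin)
qed
lemma hd_sum: "(\<And>i. i \<in> A \<Longrightarrow> hd q (F i)) \<Longrightarrow> hd q (\<lambda>x. \<Sum>i\<in>A. F i x)"
proof (induct A rule: infinite_finite_induct)
  case (infinite A) then show ?case by (simp add: hd_zero)
next
  case empty then show ?case by (simp add: hd_zero)
next
  case (insert a A) then show ?case by (simp add: hd_add)
qed

abbreviation D0 where "D0 f \<equiv> conv_deg s Vg deg 0 f"

lemma D0_iff: "D0 f \<longleftrightarrow> (\<forall>b. hd (deg b) (f b))" by (simp add: conv_deg_def)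

lemma D0_LL: "D0 f \<Longrightarrow> LL f" unfolding D0_iff LL_def using hd_lin by blast

lemma D0_star: assumes "D0 f" "D0 g" shows "D0 (star f g)"
  unfolding D0_iff
proof
  fix b
  have e: "star f g b = (\<lambda>x. \<Sum>p\<in>cop_supp cf b. s (cf b (fst p) (snd p)) (f (fst p) (g (snd p) x)))"
    by (rule ext) (simp add: star_eq split_def)
  show "hd (deg b) (star f g b)" unfolding e
  proof (rule hd_sum)
    fix p assume p: "p \<in> cop_supp cf b"
    then have "cf b (fst p) (snd p) \<noteq> 0" by (simp add: S_mem)
    then have "deg (fst p) + deg (snd p) = deg b" by (rule cf_deg)
    then have "deg b = deg (fst p) + deg (snd p)" by simp
    then have "hd (deg b) (\<lambda>x. f (fst p) (g (snd p) x))"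
      using assms by (rule_tac hd_comp[of "deg (fst p)" _ "deg (snd p)"]) (auto simp: D0_iff)
    then show "hd (deg b) (\<lambda>x. s (cf b (fst p) (snd p)) (f (fst p) (g (snd p) x)))"
      by (rule hd_scale)
  qed
qed

lemma D0_add: "D0 f \<Longrightarrow> D0 g \<Longrightarrow> D0 (f + g)"
  unfolding D0_iff plus_fun_def by (intro allI hd_add) auto
lemma D0_diff: "D0 f \<Longrightarrow> D0 g \<Longrightarrow> D0 (f - g)"
  unfolding D0_iff fun_diff_def by (intro allI hd_diff) auto
lemma D0_zero: "D0 (\<lambda>b x. 0)" by (simp add: D0_iff hd_zero)
lemma D0_zero': "D0 0" by (simp add: D0_iff hd_zero zero_fun_def)
lemma D0_neg: "D0 f \<Longrightarrow> D0 (- f)"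
  using D0_diff[OF D0_zero', of f] by simp
lemma D0_smul: "D0 f \<Longrightarrow> D0 (smul c f)"
  unfolding D0_iff smul_def by (intro allI hd_scale) auto
lemma D0_cunit: "D0 (cunit e)"
  unfolding D0_iff
proof
  fix b show "hd (deg b) (cunit e b)"
    by (cases "b = e") (simp_all add: cunit_def deg_e hd_zero hd_id[unfolded id_def[symmetric]])
qed
lemma D0_sum: "(\<And>i. i \<in> A \<Longrightarrow> D0 (F i)) \<Longrightarrow> D0 (\<Sum>i\<in>A. F i)"
proof (induct A rule: infinite_finite_induct)
  case (infinite A) then show ?case by (simp only: sum.infinite[OF infinite(1)] D0_zero')
next
  case empty then show ?case by (simp only: sum.empty D0_zero')
next
  case (insert a A) then have "D0 (F a)" "D0 (sum F A)" by auto
  then show ?case unfolding sum.insert[OF insert(1,2)] by (rule D0_add)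
qed
lemma D0_pw: "D0 w \<Longrightarrow> D0 (pw k w)"
  by (induct k) (simp_all add: D0_cunit D0_star)
lemma D0_Phi: assumes "D0 w" shows "D0 (Phi w p)"
  unfolding D0_iff Phi_def
  by (intro allI hd_sum hd_scale) (use D0_pw[OF assms] in \<open>auto simp: D0_iff\<close>)

lemma g0_iff: "f \<in> g0 s Vg deg e \<longleftrightarrow> D0 f \<and> van 1 f"
  by (simp add: g0_def van1_iff')
lemma iso_iff: "u \<in> inf_isotopies s Vg deg e \<longleftrightarrow> D0 u \<and> u e = id"
  by (simp add: inf_isotopies_def)

lemma iso_w: assumes "u \<in> inf_isotopies s Vg deg e"
  shows "LL (u - cunit e)" "van 1 (u - cunit e)" "D0 (u - cunit e)"
proof -
  show "D0 (u - cunit e)" using assms D0_diff D0_cunit by (simp add: iso_iff)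
  then show "LL (u - cunit e)" by (rule D0_LL)
  show "van 1 (u - cunit e)" using assms by (simp add: iso_iff van1_iff' fun_eq_iff cunit_app)
qed

lemma exp_g0: "f \<in> g0 s Vg deg e \<Longrightarrow> cexp s cf deg e wt f \<in> inf_isotopies s Vg deg e"
  by (auto simp: g0_iff iso_iff cexp_Phi D0_Phi Phi_at_e)

lemma log_iso: "u \<in> inf_isotopies s Vg deg e \<Longrightarrow> clog s cf deg e wt u \<in> g0 s Vg deg e"
  using iso_w[of u] by (auto simp: g0_iff clog_Phi D0_Phi van1_iff' fun_eq_iff Phi_at_e)

lemma star_iso: "u \<in> inf_isotopies s Vg deg e \<Longrightarrow> v \<in> inf_isotopies s Vg deg e \<Longrightarrow> star u v \<in> inf_isotopies s Vg deg e"
  by (auto simp: iso_iff D0_star star_at_e)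

lemma g0_LL: "f \<in> g0 s Vg deg e \<Longrightarrow> LL f" by (simp add: g0_iff D0_LL)
lemma g0_van: "f \<in> g0 s Vg deg e \<Longrightarrow> van 1 f" by (simp add: g0_iff)
lemma iso_LL: "u \<in> inf_isotopies s Vg deg e \<Longrightarrow> LL u" by (simp add: iso_iff D0_LL)

lemma log_exp_g0: "f \<in> g0 s Vg deg e \<Longrightarrow> clog s cf deg e wt (cexp s cf deg e wt f) = f"
  by (rule log_exp[OF g0_LL g0_van])
lemma exp_log_iso: "u \<in> inf_isotopies s Vg deg e \<Longrightarrow> cexp s cf deg e wt (clog s cf deg e wt u) = u"
  by (rule exp_log[OF iso_w(1,2)])

lemma exp_BCH: "x \<in> g0 s Vg deg e \<Longrightarrow> y \<in> g0 s Vg deg e \<Longrightarrow>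
   cexp s cf deg e wt (cBCH s cf deg e wt x y) = star (cexp s cf deg e wt x) (cexp s cf deg e wt y)"
  unfolding cBCH_def by (rule exp_log_iso[OF star_iso[OF exp_g0 exp_g0]])

lemma BCH_g0: "x \<in> g0 s Vg deg e \<Longrightarrow> y \<in> g0 s Vg deg e \<Longrightarrow> cBCH s cf deg e wt x y \<in> g0 s Vg deg e"
  unfolding cBCH_def by (rule log_iso[OF star_iso[OF exp_g0 exp_g0]])

lemma exp_inj: "x \<in> g0 s Vg deg e \<Longrightarrow> y \<in> g0 s Vg deg e \<Longrightarrow> cexp s cf deg e wt x = cexp s cf deg e wt y \<Longrightarrow> x = y"
  by (metis log_exp_g0)

lemma zero_g0: "(\<lambda>b x. 0) \<in> g0 s Vg deg e"
  by (simp add: g0_def D0_zero)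

lemma exp_zero: "cexp s cf deg e wt (\<lambda>b x. 0) = cunit e"
proof -
  have "(\<lambda>b x. 0) = (0 :: 'b \<Rightarrow> 'v \<Rightarrow> 'v)" by (simp add: zero_fun_def)
  then show ?thesis by (simp add: cexp_Phi Phi_zero_w smul_one)
qed

lemma log_one: "clog s cf deg e wt (cunit e) = (\<lambda>b x. 0)"
  by (intro ext) (simp add: clog_Phi Phi_zero_w smul_zero_left)

lemma neg_g0: "f \<in> g0 s Vg deg e \<Longrightarrow> - f \<in> g0 s Vg deg e"
  unfolding g0_iff using D0_neg[of f] by (simp add: van_def fun_Compl_def)

lemma gauge_group: "group (gauge_group s Vg cf deg e wt)"
proof (rule groupI, simp_all add: gauge_group_def)
  fix x y assume "x \<in> g0 s Vg deg e" "y \<in> g0 s Vg deg e"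
  then show "cBCH s cf deg e wt x y \<in> g0 s Vg deg e" by (rule BCH_g0)
next
  show "(\<lambda>b x. 0) \<in> g0 s Vg deg e" by (rule zero_g0)
next
  fix x y z assume xyz: "x \<in> g0 s Vg deg e" "y \<in> g0 s Vg deg e" "z \<in> g0 s Vg deg e"
  show "cBCH s cf deg e wt (cBCH s cf deg e wt x y) z = cBCH s cf deg e wt x (cBCH s cf deg e wt y z)"
  proof (rule exp_inj)
    show "cBCH s cf deg e wt (cBCH s cf deg e wt x y) z \<in> g0 s Vg deg e"
      using xyz by (intro BCH_g0)
    show "cBCH s cf deg e wt x (cBCH s cf deg e wt y z) \<in> g0 s Vg deg e"
      using xyz by (intro BCH_g0)
    show "cexp s cf deg e wt (cBCH s cf deg e wt (cBCH s cf deg e wt x y) z) =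
          cexp s cf deg e wt (cBCH s cf deg e wt x (cBCH s cf deg e wt y z))"
      using xyz by (simp add: exp_BCH BCH_g0 assoc iso_LL exp_g0)
  qed
next
  fix x assume x: "x \<in> g0 s Vg deg e"
  show "cBCH s cf deg e wt (\<lambda>b x. 0) x = x"
    unfolding cBCH_def exp_zero unit_left by (rule log_exp_g0[OF x])
next
  fix x assume x: "x \<in> g0 s Vg deg e"
  show "\<exists>y\<in>g0 s Vg deg e. cBCH s cf deg e wt y x = (\<lambda>b x. 0)"
  proof (intro bexI)
    show "- x \<in> g0 s Vg deg e" using neg_g0[OF x] .
    show "cBCH s cf deg e wt (- x) x = (\<lambda>b x. 0)"
      unfolding cBCH_def exp_neg_mult(1)[OF g0_LL[OF x] g0_van[OF x]] by (rule log_one)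
  qed
qed

lemma one_iso: "cunit e \<in> inf_isotopies s Vg deg e"
  using D0_cunit by (simp add: iso_iff cunit_app fun_eq_iff)

lemma isotopy_group: "group (isotopy_group s Vg cf deg e)"
proof (rule groupI, simp_all add: isotopy_group_def)
  fix x y assume "x \<in> inf_isotopies s Vg deg e" "y \<in> inf_isotopies s Vg deg e"
  then show "star x y \<in> inf_isotopies s Vg deg e" by (rule star_iso)
next
  show "cunit e \<in> inf_isotopies s Vg deg e" by (rule one_iso)
next
  fix x y z assume "x \<in> inf_isotopies s Vg deg e" "y \<in> inf_isotopies s Vg deg e" "z \<in> inf_isotopies s Vg deg e"
  then show "star (star x y) z = star x (star y z)" by (simp add: assoc iso_LL)
next
  fix x show "star (cunit e) x = x" by (rule unit_left)
next
  fix u assume u: "u \<in> inf_isotopies s Vg deg e"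
  let ?l = "clog s cf deg e wt u"
  have l: "?l \<in> g0 s Vg deg e" by (rule log_iso[OF u])
  show "\<exists>y\<in>inf_isotopies s Vg deg e. star y u = cunit e"
  proof (intro bexI)
    show "cexp s cf deg e wt (- ?l) \<in> inf_isotopies s Vg deg e" by (rule exp_g0[OF neg_g0[OF l]])
    have "star (cexp s cf deg e wt (- ?l)) (cexp s cf deg e wt ?l) = cunit e"
      by (rule exp_neg_mult(1)[OF g0_LL[OF l] g0_van[OF l]])
    then show "star (cexp s cf deg e wt (- ?l)) u = cunit e" by (simp add: exp_log_iso[OF u])
  qed
qed

lemma exp_iso: "cexp s cf deg e wt \<in> iso (gauge_group s Vg cf deg e wt) (isotopy_group s Vg cf deg e)"
proof -
  have "cexp s cf deg e wt \<in> hom (gauge_group s Vg cf deg e wt) (isotopy_group s Vg cf deg e)"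
    by (auto simp: hom_def gauge_group_def isotopy_group_def exp_g0 exp_BCH)
  moreover have "bij_betw (cexp s cf deg e wt) (g0 s Vg deg e) (inf_isotopies s Vg deg e)"
  proof (rule bij_betw_imageI)
    show "inj_on (cexp s cf deg e wt) (g0 s Vg deg e)" by (meson inj_onI exp_inj)
    show "cexp s cf deg e wt ` g0 s Vg deg e = inf_isotopies s Vg deg e"
    proof
      show "cexp s cf deg e wt ` g0 s Vg deg e \<subseteq> inf_isotopies s Vg deg e" using exp_g0 by blast
      show "inf_isotopies s Vg deg e \<subseteq> cexp s cf deg e wt ` g0 s Vg deg e"
      proof
        fix u assume u: "u \<in> inf_isotopies s Vg deg e"
        then have "u = cexp s cf deg e wt (clog s cf deg e wt u)" by (simp add: exp_log_iso)
        then show "u \<in> cexp s cf deg e wt ` g0 s Vg deg e" using log_iso[OF u] by blast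
      qed
    qed
  qed
  ultimately show ?thesis by (simp add: iso_def gauge_group_def isotopy_group_def)
qed

lemma cadd_eq: "cadd f g = f + g" by (intro ext) (simp add: cadd_def)

lemma LL_delta_plus: assumes hd: "hd (-1) d" and a: "a \<in> MC s Vg d cf deg e"
  shows "LL (cadd (cdelta e d) a)"
  unfolding LL_def cadd_def
proof
  fix b
  have "lin s (cdelta e d b)" using hd by (cases "b = e") (simp_all add: cdelta_def hd_lin lin_zero)
  moreover have "lin s (a b)" using a by (auto simp: MC_def conv_deg_def intro: hd_lin)
  ultimately show "lin s (\<lambda>x. cdelta e d b x + a b x)" by (rule lin_add_fun)
qed

lemma deligne:
  assumes hd: "hd (-1) d" and a: "a \<in> MC s Vg d cf deg e" and bt: "bt \<in> MC s Vg d cf deg e"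
    and lam: "lam \<in> g0 s Vg deg e"
  shows "cadd (cdelta e d) bt = cexp_ad s cf deg wt (-1) lam (cadd (cdelta e d) a)
          \<longleftrightarrow> (cexp s cf deg e wt lam \<in> inf_isotopies s Vg deg e
               \<and> inf_morphism s Vg cf deg (cadd (cdelta e d) a) (cadd (cdelta e d) bt)
                   (cexp s cf deg e wt lam))"
proof -
  let ?x = "cadd (cdelta e d) a" and ?y = "cadd (cdelta e d) bt"
  let ?A = "Phi (sg lam) cE" and ?En = "Phi (- lam) cE" and ?El = "Phi lam cE"
  have Lx: "LL ?x" by (rule LL_delta_plus[OF hd a])
  have Ly: "LL ?y" by (rule LL_delta_plus[OF hd bt])
  have Ll: "LL lam" using g0_LL[OF lam] .
  have Vl: "van 1 lam" using g0_van[OF lam] .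
  have E: "cexp_ad s cf deg wt (-1) lam ?x = star (star ?A ?x) ?En"
    by (rule exp_ad[OF Ll Lx Vl])
  have C: "cstar s cf deg (-1) (Phi lam cE) ?x = star ?A ?x"
    by (simp add: cstar_m1 sg_Phi[OF Ll])
  have inv1: "star ?En ?El = cunit e" and inv2: "star ?El ?En = cunit e"
    using exp_neg_mult[OF Ll Vl] by (simp_all add: cexp_Phi)
  have LA: "LL (star ?A ?x)" by (intro LL_star LL_Phi LL_sg Ll Lx)
  have iso: "cexp s cf deg e wt lam \<in> inf_isotopies s Vg deg e" by (rule exp_g0[OF lam])
  then have dg: "D0 (cexp s cf deg e wt lam)" by (simp add: iso_iff)
  have "?y = star (star ?A ?x) ?En \<longleftrightarrow> star ?A ?x = star ?y ?El"
  proof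
    assume h: "?y = star (star ?A ?x) ?En"
    have "star ?y ?El = star (star ?A ?x) (star ?En ?El)" unfolding h by (simp add: assoc LA)
    also have "\<dots> = star ?A ?x" by (simp add: inv1 unit_right LA)
    finally show "star ?A ?x = star ?y ?El" ..
  next
    assume h: "star ?A ?x = star ?y ?El"
    have "star (star ?A ?x) ?En = star ?y (star ?El ?En)" unfolding h by (simp add: assoc Ly)
    also have "\<dots> = ?y" by (simp add: inv2 unit_right Ly)
    finally show "?y = star (star ?A ?x) ?En" ..
  qed
  then show ?thesis
    using iso dg by (simp add: E inf_morphism_def C cexp_Phi)
qed

lemma main:
  assumes hd: "hd (-1) d"
  shows "group (gauge_group s Vg cf deg e wt)
    \<and> group (isotopy_group s Vg cf deg e)
    \<and> cexp s cf deg e wt \<in> iso (gauge_group s Vg cf deg e wt) (isotopy_group s Vg cf deg e)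
    \<and> (\<forall>a\<in>MC s Vg d cf deg e. \<forall>bt\<in>MC s Vg d cf deg e. \<forall>lam\<in>g0 s Vg deg e.
          cadd (cdelta e d) bt = cexp_ad s cf deg wt (-1) lam (cadd (cdelta e d) a)
          \<longleftrightarrow> (cexp s cf deg e wt lam \<in> inf_isotopies s Vg deg e
               \<and> inf_morphism s Vg cf deg (cadd (cdelta e d) a) (cadd (cdelta e d) bt)
                   (cexp s cf deg e wt lam)))
    \<and> (\<forall>a\<in>MC s Vg d cf deg e. \<forall>bt\<in>MC s Vg d cf deg e.
          bij_betw (cexp s cf deg e wt)
            {lam\<in>g0 s Vg deg e. cadd (cdelta e d) bt = cexp_ad s cf deg wt (-1) lam (cadd (cdelta e d) a)}
            {f\<in>inf_isotopies s Vg deg e. inf_morphism s Vg cf deg (cadd (cdelta e d) a) (cadd (cdelta e d) bt) f})"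
proof (intro conjI ballI)
  show "group (gauge_group s Vg cf deg e wt)" by (rule gauge_group)
  show "group (isotopy_group s Vg cf deg e)" by (rule isotopy_group)
  show "cexp s cf deg e wt \<in> iso (gauge_group s Vg cf deg e wt) (isotopy_group s Vg cf deg e)" by (rule exp_iso)
next
  fix a bt lam assume "a \<in> MC s Vg d cf deg e" "bt \<in> MC s Vg d cf deg e" "lam \<in> g0 s Vg deg e"
  then show "cadd (cdelta e d) bt = cexp_ad s cf deg wt (-1) lam (cadd (cdelta e d) a)
          \<longleftrightarrow> (cexp s cf deg e wt lam \<in> inf_isotopies s Vg deg e
               \<and> inf_morphism s Vg cf deg (cadd (cdelta e d) a) (cadd (cdelta e d) bt)
                   (cexp s cf deg e wt lam))"
    by (rule deligne[OF hd])
next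
  fix a bt assume a: "a \<in> MC s Vg d cf deg e" and bt: "bt \<in> MC s Vg d cf deg e"
  let ?P = "\<lambda>lam. cadd (cdelta e d) bt = cexp_ad s cf deg wt (-1) lam (cadd (cdelta e d) a)"
  let ?Q = "\<lambda>f. inf_morphism s Vg cf deg (cadd (cdelta e d) a) (cadd (cdelta e d) bt) f"
  have PQ: "\<And>lam. lam \<in> g0 s Vg deg e \<Longrightarrow> ?P lam \<longleftrightarrow> ?Q (cexp s cf deg e wt lam)"
    using deligne[OF hd a bt] exp_g0 by blast
  show "bij_betw (cexp s cf deg e wt) {lam\<in>g0 s Vg deg e. ?P lam} {f\<in>inf_isotopies s Vg deg e. ?Q f}"
  proof (rule bij_betw_imageI)
    show "inj_on (cexp s cf deg e wt) {lam\<in>g0 s Vg deg e. ?P lam}"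
      by (rule inj_onI) (auto intro: exp_inj)
    show "cexp s cf deg e wt ` {lam\<in>g0 s Vg deg e. ?P lam} = {f\<in>inf_isotopies s Vg deg e. ?Q f}"
    proof
      show "cexp s cf deg e wt ` {lam\<in>g0 s Vg deg e. ?P lam} \<subseteq> {f\<in>inf_isotopies s Vg deg e. ?Q f}"
        using PQ exp_g0 by blast
      show "{f\<in>inf_isotopies s Vg deg e. ?Q f} \<subseteq> cexp s cf deg e wt ` {lam\<in>g0 s Vg deg e. ?P lam}"
      proof
        fix u assume u: "u \<in> {f\<in>inf_isotopies s Vg deg e. ?Q f}"
        then have ui: "u \<in> inf_isotopies s Vg deg e" and uq: "?Q u" by auto
        have l: "clog s cf deg e wt u \<in> g0 s Vg deg e" by (rule log_iso[OF ui])
        have eu: "cexp s cf deg e wt (clog s cf deg e wt u) = u" by (rule exp_log_iso[OF ui])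
        have "?P (clog s cf deg e wt u)" using PQ[OF l] uq eu by simp
        then show "u \<in> cexp s cf deg e wt ` {lam\<in>g0 s Vg deg e. ?P lam}"
          using l eu by (metis (mono_tags, lifting) image_eqI mem_Collect_eq)
      qed
    qed
  qed
qed

end

theorem theorem3p2:
  fixes s :: "'k::field_char_0 \<Rightarrow> 'v::ab_group_add \<Rightarrow> 'v"
    and Vg :: "int \<Rightarrow> 'v set" and d :: "'v \<Rightarrow> 'v"
    and cf :: "'b \<Rightarrow> 'b \<Rightarrow> 'b \<Rightarrow> 'k" and e :: 'b and wt :: "'b \<Rightarrow> nat" and deg :: "'b \<Rightarrow> int"
  assumes "wg_coalgebra cf e wt deg"
    and "chain_complex s Vg d"
  shows "group (gauge_group s Vg cf deg e wt)
    \<and> group (isotopy_group s Vg cf deg e)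
    \<and> cexp s cf deg e wt \<in> iso (gauge_group s Vg cf deg e wt) (isotopy_group s Vg cf deg e)
    \<and> (\<forall>a\<in>MC s Vg d cf deg e. \<forall>bt\<in>MC s Vg d cf deg e. \<forall>lam\<in>g0 s Vg deg e.
          cadd (cdelta e d) bt = cexp_ad s cf deg wt (-1) lam (cadd (cdelta e d) a)
          \<longleftrightarrow> (cexp s cf deg e wt lam \<in> inf_isotopies s Vg deg e
               \<and> inf_morphism s Vg cf deg (cadd (cdelta e d) a) (cadd (cdelta e d) bt)
                   (cexp s cf deg e wt lam)))
    \<and> (\<forall>a\<in>MC s Vg d cf deg e. \<forall>bt\<in>MC s Vg d cf deg e.
          bij_betw (cexp s cf deg e wt)
            {lam\<in>g0 s Vg deg e. cadd (cdelta e d) bt = cexp_ad s cf deg wt (-1) lam (cadd (cdelta e d) a)}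
            {f\<in>inf_isotopies s Vg deg e. inf_morphism s Vg cf deg (cadd (cdelta e d) a) (cadd (cdelta e d) bt) f})"
proof -
  have vs: "vector_space s" and sub: "\<And>i. module.subspace s (Vg i)" and hd: "hom_end s Vg (-1) d"
    using assms(2) by (auto simp: chain_complex_def graded_vs_def)
  interpret C: CVG s cf e wt deg Vg
    by (intro CVG.intro CV.intro CV_axioms.intro CVG_axioms.intro vs assms(1) sub)
  show ?thesis by (rule C.main[OF hd])
qed

end
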